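(* Let $a,b,c,d>0$, $\mu\in(0,1]$, $u\ge0$, and consider on $\mathcal{I}=[0,1]^2$ the controlled system $$\dot x=x(1-x)\big[xr(-c+d-a+b)+x(a-b)-r(d+b)+b+u\big]+\mu(1-2x),\qquad \dot r=r(1-r)(2x-1).$$ If $u>(c+d)/2$, then on the side $\mathcal{B}_t=\{(x,1):x\in[0,1]\}$ there exists an equilibrium $(x_t^*,1)$ with $x_t^*\in(1/2,1)$, and all other equilibria on $\mathcal{B}_t$ (if any) lie in $\{(x,1):x\in(0,1/2)\}$. *)

theory Defs
  imports Complex_Main
begin

definition xdot :: "real \<Rightarrow> real \<Rightarrow> real \<Rightarrow> real \<Rightarrow> real \<Rightarrow> real \<Rightarrow> real \<Rightarrow> real \<Rightarrow> real" where
  "xdot a b c d \<mu> u x r =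
     x * (1 - x) * (x * r * (- c + d - a + b) + x * (a - b) - r * (d + b) + b + u)
     + \<mu> * (1 - 2 * x)"

definition rdot :: "real \<Rightarrow> real \<Rightarrow> real" where
  "rdot x r = r * (1 - r) * (2 * x - 1)"

definition equilibrium :: "real \<Rightarrow> real \<Rightarrow> real \<Rightarrow> real \<Rightarrow> real \<Rightarrow> real \<Rightarrow> real \<Rightarrow> real \<Rightarrow> bool" where
  "equilibrium a b c d \<mu> u x r \<longleftrightarrow>
     x \<in> {0..1} \<and> r \<in> {0..1} \<and> xdot a b c d \<mu> u x r = 0 \<and> rdot x r = 0"

end

theory Submission
  imports Defs
begin

lemma xdot1: "xdot a b c d \<mu> u x 1 = x*(1-x)*(x*(d-c)+u-d) + \<mu>*(1-2*x)"
  unfolding xdot_def by (simp add: algebra_simps)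

lemma uniq_aux:
  fixes k s \<mu> t1 t2 p1 p2 :: real
  assumes "k > 0" "\<mu> > 0" "0 < t1" "t1 < t2" "p1 > p2" "p2 > 0"
    and e1: "p1 * (k + s*t1) = 2*\<mu>*t1" and e2: "p2 * (k + s*t2) = 2*\<mu>*t2"
  shows False
proof -
  have a1: "k/t1 + s = 2*\<mu>/p1" using e1 assms by (simp add: field_simps)
  have a2: "k/t2 + s = 2*\<mu>/p2" using e2 assms by (simp add: field_simps)
  have "2*\<mu>/p1 < 2*\<mu>/p2" using assms by (simp add: frac_less2)
  moreover have "k/t2 < k/t1" using assms by (simp add: frac_less2)
  ultimately show False using a1 a2 by linarith
qed

lemma uniq:
  fixes c d \<mu> u x1 x2 :: real
  assumes "u > (c+d)/2" "\<mu> > 0" "1/2 < x1" "x1 < x2" "x2 < 1"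
    and "x1*(1-x1)*(x1*(d-c)+u-d) + \<mu>*(1-2*x1) = 0"
    and "x2*(1-x2)*(x2*(d-c)+u-d) + \<mu>*(1-2*x2) = 0"
  shows False
proof -
  have k: "(d-c)/2+u-d > 0" using assms by (simp add: field_simps)
  have p: "x1*(1-x1) > x2*(1-x2)"
  proof -
    have "x1*(1-x1) - x2*(1-x2) = (x2-x1)*(x1+x2-1)" by (simp add: algebra_simps)
    moreover have "(x2-x1)*(x1+x2-1) > 0" using assms by simp
    ultimately show ?thesis by linarith
  qed
  have p2: "x2*(1-x2) > 0" using assms by simp
  have e1: "x1 * (1 - x1) * ((d - c) / 2 + u - d + (d - c) * (x1 - 1 / 2)) = 2 * \<mu> * (x1 - 1 / 2)"
    using assms(6) by (simp add: algebra_simps)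
  have e2: "x2 * (1 - x2) * ((d - c) / 2 + u - d + (d - c) * (x2 - 1 / 2)) = 2 * \<mu> * (x2 - 1 / 2)"
    using assms(7) by (simp add: algebra_simps)
  have t1: "0 < x1 - 1/2" "x1 - 1/2 < x2 - 1/2" using assms by auto
  show False using uniq_aux[OF k assms(2) t1 p p2 e1 e2] .
qed

theorem lemma18:
  fixes a b c d \<mu> u :: real
  assumes "a > 0" "b > 0" "c > 0" "d > 0"
    and "\<mu> > 0" "\<mu> \<le> 1" "u \<ge> 0"
    and "u > (c + d) / 2"
  shows "\<exists>xt. xt \<in> {1/2<..<1} \<and> equilibrium a b c d \<mu> u xt 1 \<and>
           (\<forall>x. equilibrium a b c d \<mu> u x 1 \<and> x \<noteq> xt \<longrightarrow> x \<in> {0<..<1/2})"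
proof -
  define f where "f x = x*(1-x)*(x*(d-c)+u-d) + \<mu>*(1-2*x)" for x :: real
  have f12: "f (1/2) > 0" using assms unfolding f_def by (simp add: field_simps)
  have f1: "f 1 < 0" using assms unfolding f_def by simp
  have f0: "f 0 > 0" using assms unfolding f_def by simp
  have cont: "\<forall>x. 1/2 \<le> x \<and> x \<le> 1 \<longrightarrow> isCont f x" unfolding f_def by (intro allI impI) (intro continuous_intros)
  obtain xt where xt: "1/2 \<le> xt" "xt \<le> 1" "f xt = 0"
    using IVT2[of f 1 0 "1/2", OF _ _ _ cont] f12 f1 by auto
  have xt2: "xt \<in> {1/2<..<1}" using xt f12 f1 by (cases "xt = 1/2"; cases "xt = 1") auto
  have eq: "equilibrium a b c d \<mu> u x 1 \<longleftrightarrow> x \<in> {0..1} \<and> f x = 0" for x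
    unfolding equilibrium_def rdot_def xdot1 f_def by simp
  show ?thesis
  proof (intro exI conjI allI impI)
    show "xt \<in> {1/2<..<1}" by fact
    show "equilibrium a b c d \<mu> u xt 1" using eq xt xt2 by auto
  next
    fix x assume h: "equilibrium a b c d \<mu> u x 1 \<and> x \<noteq> xt"
    hence x: "0 \<le> x" "x \<le> 1" "f x = 0" "x \<noteq> xt" using eq by auto
    have "x \<noteq> 0" "x \<noteq> 1/2" "x \<noteq> 1" using x f0 f12 f1 by (metis less_irrefl)+
    moreover have "\<not> (1/2 < x \<and> x < 1)"
    proof
      assume "1/2 < x \<and> x < 1"
      hence hx: "1/2 < x" "x < 1" by auto
      have fx: "x*(1-x)*(x*(d-c)+u-d) + \<mu>*(1-2*x) = 0" using x(3) unfolding f_def .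
      have fxt: "xt*(1-xt)*(xt*(d-c)+u-d) + \<mu>*(1-2*xt) = 0" using xt(3) unfolding f_def .
      show False
      proof (cases "x < xt")
        case True
        then show False using uniq[OF assms(8) assms(5) hx(1) True _ fx fxt] xt2 by auto
      next
        case False
        hence "xt < x" using x(4) by auto
        then show False using uniq[OF assms(8) assms(5) _ \<open>xt < x\<close> hx(2) fxt fx] xt2 by auto
      qed
    qed
    ultimately show "x \<in> {0<..<1/2}" using x by auto
  qed
qed

end
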